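(* Let $\hat H,\hat H'$ be $p\times p$ transfer functions. Then $\hat H\sim\hat H'$ (shift equivalence) if and only if all of the following hold: (1) $\hat H_{ii}=\hat H'_{ii}$ for all $i$; (2) for all $i\neq j$, $\hat H_{ij}=0$ if and only if $\hat H'_{ij}=0$; (3) for all $i\ne j$ with $\hat H_{ij}\neq0$ there is an integer $b_{ij}$ with $\hat H'_{ij}(z)/\hat H_{ij}(z)=z^{b_{ij}}$; (4) the linear system $b_{ij}=m_j-m_i$ for all $i\neq j$ with $\hat H_{ij}\ne0$ has a solution $m\in\mathbb{R}^p$. Moreover, whenever this system has a real solution it has an integer solution.
   Context: For nonnegative integers $m=(m_1,\dots,m_p)$, the multi-shift is $\hat\Delta_m(z)=\mathrm{diag}(z^{-m_1},\dots,z^{-m_p})$. Two $p\times p$ transfer functions (matrices of rational functions of $z$) are shift-equivalent, $\hat H_1\sim\hat H_2$, if there is a multi-shift $\hat\Delta_m$ with $\hat H_1=\hat\Delta_m\hat H_2\hat\Delta_m^{-1}$. *)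

theory Defs
  imports "HOL-Analysis.Analysis" "HOL-Computational_Algebra.Fraction_Field"
          "HOL-Computational_Algebra.Polynomial"
begin

type_synonym ratfun = "real poly fract"

definition zvar :: ratfun where
  "zvar = Fract [:0, 1:] 1"

text \<open>p x p transfer functions: matrices indexed by a finite type 'n (p = CARD('n)).\<close>
type_synonym 'n transfer = "ratfun ^ 'n ^ 'n"

definition multishift :: "('n::finite \<Rightarrow> nat) \<Rightarrow> 'n transfer" where
  "multishift m = (\<chi> i j. if i = j then zvar powi (- int (m i)) else 0)"

definition shift_equiv :: "'n::finite transfer \<Rightarrow> 'n transfer \<Rightarrow> bool" (infix \<open>\<sim>\<^sub>s\<close> 50) where
  "H1 \<sim>\<^sub>s H2 \<longleftrightarrow>
     (\<exists>m. H1 = multishift m ** H2 ** matrix_inv (multishift m))"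

end

theory Submission
  imports Defs
begin

lemma zvar_nz: "zvar \<noteq> 0"
  unfolding zvar_def by (simp add: Zero_fract_def eq_fract)

definition dg :: "('n::finite \<Rightarrow> ratfun) \<Rightarrow> 'n transfer" where
  "dg d = (\<chi> i j. if i = j then d i else 0)"

lemma sum_delta_l: "(\<Sum>k\<in>UNIV. (if (i::'n::finite) = k then a k else 0) * f k) = a i * (f i :: ratfun)"
proof -
  have "(\<Sum>k\<in>UNIV. (if i = k then a k else 0) * f k) = (\<Sum>k\<in>UNIV. if i = k then a k * f k else 0)"
    by (rule sum.cong) auto
  also have "\<dots> = a i * f i" by (simp add: sum.delta')
  finally show ?thesis .
qed

lemma sum_delta_r: "(\<Sum>k\<in>UNIV. f k * (if k = (j::'n::finite) then a k else 0)) = (f j :: ratfun) * a j"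
proof -
  have "(\<Sum>k\<in>UNIV. f k * (if k = j then a k else 0)) = (\<Sum>k\<in>UNIV. if k = j then f k * a k else 0)"
    by (rule sum.cong) auto
  also have "\<dots> = f j * a j" by (simp add: sum.delta)
  finally show ?thesis .
qed

lemma dg_mult: "(dg d ** A ** dg e) $ i $ j = d i * A $ i $ j * e j"
proof -
  have "(dg d ** A) $ i $ k = d i * A $ i $ k" for k
    unfolding dg_def matrix_matrix_mult_def by (simp add: sum_delta_l)
  then show ?thesis
    unfolding matrix_matrix_mult_def[of "dg d ** A"] by (simp add: dg_def sum_delta_r)
qed

lemma dg_dg: "dg d ** dg e = dg (\<lambda>i. d i * e i)"
  unfolding vec_eq_iff by (auto simp: dg_def matrix_matrix_mult_def sum_delta_l)

lemma dg_one: "dg (\<lambda>i. 1) = mat 1"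
  by (simp add: dg_def mat_def vec_eq_iff)

lemma matrix_inv_dg:
  assumes "\<And>i. d i \<noteq> 0"
  shows "matrix_inv (dg d) = dg (\<lambda>i. inverse (d i))"
proof -
  let ?E = "dg (\<lambda>i. inverse (d i))"
  have e1: "dg d ** ?E = mat 1" and e2: "?E ** dg d = mat 1"
    using assms by (simp_all add: dg_dg dg_one)
  define A' where "A' = matrix_inv (dg d)"
  have "dg d ** A' = mat 1 \<and> A' ** dg d = mat 1"
    unfolding A'_def matrix_inv_def by (rule someI[of _ ?E]) (use e1 e2 in auto)
  then have h: "dg d ** A' = mat 1" by blast
  have "A' = mat 1 ** A'" by (rule matrix_mul_lid[symmetric])
  also have "\<dots> = (?E ** dg d) ** A'" by (simp only: e2)
  also have "\<dots> = ?E ** (dg d ** A')" by (rule matrix_mul_assoc[symmetric])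
  also have "\<dots> = ?E" by (simp only: h matrix_mul_rid)
  finally show ?thesis unfolding A'_def .
qed

lemma shift_entry:
  "(multishift m ** H ** matrix_inv (multishift m)) $ i $ j
     = zvar powi (- int (m i)) * H $ i $ j * zvar powi (int (m j))"
proof -
  have ms: "multishift m = dg (\<lambda>i. zvar powi (- int (m i)))"
    by (simp add: multishift_def dg_def)
  have "matrix_inv (multishift m) = dg (\<lambda>i. inverse (zvar powi (- int (m i))))"
    unfolding ms by (rule matrix_inv_dg) (simp add: zvar_nz)
  then show ?thesis unfolding ms
    by (simp add: dg_mult power_int_minus)
qed

lemma shift_equiv_iff:
  "H \<sim>\<^sub>s H' \<longleftrightarrow> (\<exists>m. \<forall>i j. H $ i $ j = zvar powi (- int (m i)) * H' $ i $ j * zvar powi (int (m j)))"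
  unfolding shift_equiv_def by (simp add: vec_eq_iff shift_entry)

lemma int_sol:
  assumes "\<forall>i j. P i j \<longrightarrow> real_of_int (b i j) = m j - m i"
  shows "\<exists>m :: 'n \<Rightarrow> int. \<forall>i j. P i j \<longrightarrow> b i j = m j - m i"
proof (intro exI allI impI)
  fix i j assume "P i j"
  then have "m j = m i + of_int (b i j)" using assms by auto
  then have "floor (m j) = floor (m i) + b i j" by simp
  then show "b i j = floor (m j) - floor (m i)" by simp
qed

lemma alg1: "(a::ratfun) \<noteq> 0 \<Longrightarrow> inverse a * x * a = x"
  by (simp add: field_simps)

lemma alg2: "(a::ratfun) \<noteq> 0 \<Longrightarrow> c \<noteq> 0 \<Longrightarrow> x \<noteq> 0 \<Longrightarrow> x / (inverse a * x * c) = a / c"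
  by (simp add: field_simps)

lemma alg3: "(a::ratfun) \<noteq> 0 \<Longrightarrow> c \<noteq> 0 \<Longrightarrow> x \<noteq> 0 \<Longrightarrow> y / x = a / c \<Longrightarrow> x = inverse a * y * c"
  by (simp add: field_simps)

lemma alg0: "(a::ratfun) \<noteq> 0 \<Longrightarrow> c \<noteq> 0 \<Longrightarrow> (inverse a * x * c = 0) = (x = 0)"
  by simp

lemma pw_nz: "zvar powi k \<noteq> 0"
  using zvar_nz by simp

lemma shift_equiv_iff2:
  "H \<sim>\<^sub>s H' \<longleftrightarrow> (\<exists>m::'n::finite\<Rightarrow>nat. \<forall>i j. H $ i $ j = inverse (zvar powi (int (m i))) * H' $ i $ j * zvar powi (int (m j)))"
  unfolding shift_equiv_iff by (simp add: power_int_minus)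

lemma fwd:
  fixes H H' :: "'n::finite transfer"
  assumes "H \<sim>\<^sub>s H'"
  shows "(\<forall>i. H $ i $ i = H' $ i $ i) \<and>
           (\<forall>i j. i \<noteq> j \<longrightarrow> (H $ i $ j = 0 \<longleftrightarrow> H' $ i $ j = 0)) \<and>
           (\<exists>b :: 'n \<Rightarrow> 'n \<Rightarrow> int.
              (\<forall>i j. i \<noteq> j \<and> H $ i $ j \<noteq> 0 \<longrightarrow>
                     H' $ i $ j / H $ i $ j = zvar powi (b i j)) \<and>
              (\<exists>m :: 'n \<Rightarrow> real. \<forall>i j. i \<noteq> j \<and> H $ i $ j \<noteq> 0 \<longrightarrow>
                     real_of_int (b i j) = m j - m i))"
proof -
  obtain m :: "'n \<Rightarrow> nat" where hm: "\<And>i j. H $ i $ j = inverse (zvar powi (int (m i))) * H' $ i $ j * zvar powi (int (m j))"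
    using assms unfolding shift_equiv_iff2 by blast
  have diag: "\<forall>i. H $ i $ i = H' $ i $ i"
  proof
    fix i
    show "H $ i $ i = H' $ i $ i" unfolding hm[of i i] by (rule alg1[OF pw_nz])
  qed
  have zero: "\<forall>i j. i \<noteq> j \<longrightarrow> (H $ i $ j = 0 \<longleftrightarrow> H' $ i $ j = 0)"
  proof (intro allI impI)
    fix i j
    show "(H $ i $ j = 0) = (H' $ i $ j = 0)"
      unfolding hm[of i j] by (rule alg0[OF pw_nz pw_nz])
  qed
  have quot: "H' $ i $ j / H $ i $ j = zvar powi (int (m i) - int (m j))"
    if "H $ i $ j \<noteq> 0" for i j
  proof -
    have nz: "H' $ i $ j \<noteq> 0" using that hm[of i j] by auto
    have "H' $ i $ j / H $ i $ j = zvar powi (int (m i)) / zvar powi (int (m j))"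
      unfolding hm[of i j] by (rule alg2[OF pw_nz pw_nz nz])
    also have "\<dots> = zvar powi (int (m i) - int (m j))"
      by (rule power_int_diff[symmetric]) (rule disjI1[OF zvar_nz])
    finally show ?thesis .
  qed
  show ?thesis
  proof (intro conjI exI)
    show "\<forall>i. H $ i $ i = H' $ i $ i" by (rule diag)
    show "\<forall>i j. i \<noteq> j \<longrightarrow> (H $ i $ j = 0 \<longleftrightarrow> H' $ i $ j = 0)" by (rule zero)
    show "\<forall>i j. i \<noteq> j \<and> H $ i $ j \<noteq> 0 \<longrightarrow>
            H' $ i $ j / H $ i $ j = zvar powi (int (m i) - int (m j))"
      using quot by blast
    show "\<forall>i j. i \<noteq> j \<and> H $ i $ j \<noteq> 0 \<longrightarrow>
            real_of_int (int (m i) - int (m j)) = (\<lambda>k. - real (m k)) j - (\<lambda>k. - real (m k)) i"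
      by simp
  qed
qed

lemma bwd:
  fixes H H' :: "'n::finite transfer"
  assumes diag: "\<And>i. H $ i $ i = H' $ i $ i"
    and zero: "\<And>i j. i \<noteq> j \<Longrightarrow> (H $ i $ j = 0 \<longleftrightarrow> H' $ i $ j = 0)"
    and bq: "\<And>i j. i \<noteq> j \<Longrightarrow> H $ i $ j \<noteq> 0 \<Longrightarrow> H' $ i $ j / H $ i $ j = zvar powi (b i j)"
    and bm: "\<forall>i j. i \<noteq> j \<and> H $ i $ j \<noteq> 0 \<longrightarrow> real_of_int (b i j) = mr j - mr i"
  shows "H \<sim>\<^sub>s H'"
proof -
  from int_sol[OF bm] obtain k :: "'n \<Rightarrow> int" where
    bk: "\<And>i j. i \<noteq> j \<Longrightarrow> H $ i $ j \<noteq> 0 \<Longrightarrow> b i j = k j - k i" by blast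
  define C where "C = Max (range k)"
  have kC: "k i \<le> C" for i unfolding C_def by simp
  define m where "m i = nat (C - k i)" for i
  have mi: "int (m i) = C - k i" for i using kC[of i] by (simp add: m_def)
  have "\<forall>i j. H $ i $ j = inverse (zvar powi (int (m i))) * H' $ i $ j * zvar powi (int (m j))"
  proof (intro allI)
    fix i j
    show "H $ i $ j = inverse (zvar powi (int (m i))) * H' $ i $ j * zvar powi (int (m j))"
    proof (cases "i = j")
      case True
      then show ?thesis using diag[of i] alg1[OF pw_nz, of "int (m i)" "H' $ i $ i"] by simp
    next
      case F: False
      show ?thesis
      proof (cases "H $ i $ j = 0")
        case True then show ?thesis using zero[OF F] by simp
      next
        case False
        have "b i j = int (m i) - int (m j)" using bk[OF F False] mi[of i] mi[of j] by simp
        then have "H' $ i $ j / H $ i $ j = zvar powi (int (m i)) / zvar powi (int (m j))"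
          using bq[OF F False] power_int_diff[OF disjI1[OF zvar_nz], of "int (m i)" "int (m j)"] by simp
        then show ?thesis by (rule alg3[OF pw_nz pw_nz False])
      qed
    qed
  qed
  then show ?thesis unfolding shift_equiv_iff2 by blast
qed

theorem mainTheorem12:
  fixes H H' :: "'n::finite transfer"
  shows "(H \<sim>\<^sub>s H' \<longleftrightarrow>
           (\<forall>i. H $ i $ i = H' $ i $ i) \<and>
           (\<forall>i j. i \<noteq> j \<longrightarrow> (H $ i $ j = 0 \<longleftrightarrow> H' $ i $ j = 0)) \<and>
           (\<exists>b :: 'n \<Rightarrow> 'n \<Rightarrow> int.
              (\<forall>i j. i \<noteq> j \<and> H $ i $ j \<noteq> 0 \<longrightarrow>
                     H' $ i $ j / H $ i $ j = zvar powi (b i j)) \<and>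
              (\<exists>m :: 'n \<Rightarrow> real. \<forall>i j. i \<noteq> j \<and> H $ i $ j \<noteq> 0 \<longrightarrow>
                     real_of_int (b i j) = m j - m i)))
         \<and>
         (\<forall>b :: 'n \<Rightarrow> 'n \<Rightarrow> int.
            (\<exists>m :: 'n \<Rightarrow> real. \<forall>i j. i \<noteq> j \<and> H $ i $ j \<noteq> 0 \<longrightarrow>
                     real_of_int (b i j) = m j - m i) \<longrightarrow>
            (\<exists>m :: 'n \<Rightarrow> int. \<forall>i j. i \<noteq> j \<and> H $ i $ j \<noteq> 0 \<longrightarrow>
                     b i j = m j - m i))"
proof (intro conjI allI impI)
  fix b :: "'n \<Rightarrow> 'n \<Rightarrow> int"
  assume "\<exists>m :: 'n \<Rightarrow> real. \<forall>i j. i \<noteq> j \<and> H $ i $ j \<noteq> 0 \<longrightarrow>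
                     real_of_int (b i j) = m j - m i"
  then obtain mr :: "'n \<Rightarrow> real" where
    hmr: "\<forall>i j. i \<noteq> j \<and> H $ i $ j \<noteq> 0 \<longrightarrow> real_of_int (b i j) = mr j - mr i" by blast
  show "\<exists>m :: 'n \<Rightarrow> int. \<forall>i j. i \<noteq> j \<and> H $ i $ j \<noteq> 0 \<longrightarrow> b i j = m j - m i"
    by (rule int_sol[OF hmr])
next
  show "(H \<sim>\<^sub>s H') = ((\<forall>i. H $ i $ i = H' $ i $ i) \<and>
           (\<forall>i j. i \<noteq> j \<longrightarrow> (H $ i $ j = 0 \<longleftrightarrow> H' $ i $ j = 0)) \<and>
           (\<exists>b :: 'n \<Rightarrow> 'n \<Rightarrow> int.
              (\<forall>i j. i \<noteq> j \<and> H $ i $ j \<noteq> 0 \<longrightarrow>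
                     H' $ i $ j / H $ i $ j = zvar powi (b i j)) \<and>
              (\<exists>m :: 'n \<Rightarrow> real. \<forall>i j. i \<noteq> j \<and> H $ i $ j \<noteq> 0 \<longrightarrow>
                     real_of_int (b i j) = m j - m i)))" (is "?L = ?R")
  proof
    assume "H \<sim>\<^sub>s H'"
    then show ?R by (rule fwd)
  next
    assume R: "(\<forall>i. H $ i $ i = H' $ i $ i) \<and>
           (\<forall>i j. i \<noteq> j \<longrightarrow> (H $ i $ j = 0 \<longleftrightarrow> H' $ i $ j = 0)) \<and>
           (\<exists>b :: 'n \<Rightarrow> 'n \<Rightarrow> int.
              (\<forall>i j. i \<noteq> j \<and> H $ i $ j \<noteq> 0 \<longrightarrow>
                     H' $ i $ j / H $ i $ j = zvar powi (b i j)) \<and>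
              (\<exists>m :: 'n \<Rightarrow> real. \<forall>i j. i \<noteq> j \<and> H $ i $ j \<noteq> 0 \<longrightarrow>
                     real_of_int (b i j) = m j - m i))"
    have R1: "\<forall>i. H $ i $ i = H' $ i $ i" using R by (rule conjunct1)
    have R2: "\<forall>i j. i \<noteq> j \<longrightarrow> (H $ i $ j = 0 \<longleftrightarrow> H' $ i $ j = 0)"
      using R by (rule conjunct1[OF conjunct2])
    have R3: "\<exists>b :: 'n \<Rightarrow> 'n \<Rightarrow> int.
              (\<forall>i j. i \<noteq> j \<and> H $ i $ j \<noteq> 0 \<longrightarrow>
                     H' $ i $ j / H $ i $ j = zvar powi (b i j)) \<and>
              (\<exists>m :: 'n \<Rightarrow> real. \<forall>i j. i \<noteq> j \<and> H $ i $ j \<noteq> 0 \<longrightarrow>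
                     real_of_int (b i j) = m j - m i)"
      using R by (rule conjunct2[OF conjunct2])
    then obtain b :: "'n \<Rightarrow> 'n \<Rightarrow> int" where
      bb: "(\<forall>i j. i \<noteq> j \<and> H $ i $ j \<noteq> 0 \<longrightarrow> H' $ i $ j / H $ i $ j = zvar powi (b i j)) \<and>
           (\<exists>m :: 'n \<Rightarrow> real. \<forall>i j. i \<noteq> j \<and> H $ i $ j \<noteq> 0 \<longrightarrow>
                     real_of_int (b i j) = m j - m i)" ..
    note bq = conjunct1[OF bb]
    note bm0 = conjunct2[OF bb]
    from bm0 obtain mr :: "'n \<Rightarrow> real" where
      bm: "\<forall>i j. i \<noteq> j \<and> H $ i $ j \<noteq> 0 \<longrightarrow> real_of_int (b i j) = mr j - mr i"
      ..
    have d: "\<And>i. H $ i $ i = H' $ i $ i" using R1 by (rule spec)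
    have z: "\<And>i j. i \<noteq> j \<Longrightarrow> (H $ i $ j = 0 \<longleftrightarrow> H' $ i $ j = 0)" using R2 by simp
    have q: "\<And>i j. i \<noteq> j \<Longrightarrow> H $ i $ j \<noteq> 0 \<Longrightarrow> H' $ i $ j / H $ i $ j = zvar powi (b i j)"
      using bq by simp
    show "H \<sim>\<^sub>s H'"
      by (rule bwd[OF d z q bm])
  qed
qed

end
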